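(* Let $(X_1,Y_1),\dots,(X_{n+m},Y_{n+m})$ be exchangeable random elements of $\mathcal{X}\times\mathcal{Y}$ (indices $1,\dots,n$ calibration, $n+1,\dots,n+m$ test), $f$ a fixed model, $\mathcal{L}(f,x,y)\in[0,1]$ a known risk map, $s:\mathcal{X}\to[0,1]$ a fixed score, and $L_i=\mathcal{L}(f,X_i,Y_i)$. Then for any fixed $\gamma>0$ and every $j\in\{1,\dots,m\}$, the random variable $E_{\gamma,n+j}$ defined below satisfies $E_{\gamma,n+j}\ge0$ and $\mathbb{E}[L_{n+j}E_{\gamma,n+j}]\le1$.
   Context: Let $\mathcal{M}=\{s(X_i)\}_{i=1}^{n+m}$. For $t\in\mathbb{R}$ and $\ell\in[0,1]$ define $$\mathrm{FR}_{n+j}(t;\ell)=\frac{\ell\mathbf{1}\{s(X_{n+j})\le t\}+\sum_{i=1}^nL_i\mathbf{1}\{s(X_i)\le t\}}{1+\sum_{k\ne j,k\le m}\mathbf{1}\{s(X_{n+k})\le t\}}\cdot\frac{m}{n+1},$$ $t_{\gamma,n+j}(\ell)=\max\{t\in\mathcal{M}:\mathrm{FR}_{n+j}(t;\ell)\le\gamma\}$ (with $\max\emptyset=-\infty$), and $$E_{\gamma,n+j}=\inf_{\ell\in[0,1]}\frac{(n+1)\mathbf{1}\{s(X_{n+j})\le t_{\gamma,n+j}(\ell)\}}{\ell\mathbf{1}\{s(X_{n+j})\le t_{\gamma,n+j}(\ell)\}+\sum_{i=1}^nL_i\mathbf{1}\{s(X_i)\le t_{\gamma,n+j}(\ell)\}},$$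 each ratio being $0$ when its numerator is $0$ and $+\infty$ when the numerator is positive and denominator $0$; and $E_{\gamma,n+j}=0$ if $\inf_{\ell}t_{\gamma,n+j}(\ell)=-\infty$. *)

theory Defs
  imports "HOL-Probability.Probability" "HOL-Combinatorics.Permutations"
begin

(* Deterministic ingredients. S i = s(X_i), Lc i = L_i (i = 1..n+m). *)

definition ind :: "bool \<Rightarrow> real" where
  "ind b = (if b then 1 else 0)"

definition FR :: "nat \<Rightarrow> nat \<Rightarrow> (nat \<Rightarrow> real) \<Rightarrow> (nat \<Rightarrow> real) \<Rightarrow> nat \<Rightarrow> real \<Rightarrow> real \<Rightarrow> real" where
  "FR n m S Lc j t l =
     (l * ind (S (n + j) \<le> t) + (\<Sum>i\<in>{1..n}. Lc i * ind (S i \<le> t)))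
     / (1 + real (card {k\<in>{1..m}. k \<noteq> j \<and> S (n + k) \<le> t}))
     * (real m / (real n + 1))"

definition Mscores :: "nat \<Rightarrow> nat \<Rightarrow> (nat \<Rightarrow> real) \<Rightarrow> real set" where
  "Mscores n m S = S ` {1..n+m}"

definition tgam :: "nat \<Rightarrow> nat \<Rightarrow> (nat \<Rightarrow> real) \<Rightarrow> (nat \<Rightarrow> real) \<Rightarrow> real \<Rightarrow> nat \<Rightarrow> real \<Rightarrow> ereal" where
  "tgam n m S Lc \<gamma> j l =
     (let A = {t\<in>Mscores n m S. FR n m S Lc j t l \<le> \<gamma>}
      in if A = {} then -\<infinity> else ereal (Max A))"

definition Eratio :: "nat \<Rightarrow> nat \<Rightarrow> (nat \<Rightarrow> real) \<Rightarrow> (nat \<Rightarrow> real) \<Rightarrow> real \<Rightarrow> nat \<Rightarrow> real \<Rightarrow> ereal" where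
  "Eratio n m S Lc \<gamma> j l =
     (let T = tgam n m S Lc \<gamma> j l;
          num = (real n + 1) * ind (ereal (S (n + j)) \<le> T);
          den = l * ind (ereal (S (n + j)) \<le> T)
                + (\<Sum>i\<in>{1..n}. Lc i * ind (ereal (S i) \<le> T))
      in if num = 0 then 0 else if den = 0 then \<infinity> else ereal (num / den))"

definition Egam :: "nat \<Rightarrow> nat \<Rightarrow> (nat \<Rightarrow> real) \<Rightarrow> (nat \<Rightarrow> real) \<Rightarrow> real \<Rightarrow> nat \<Rightarrow> ereal" where
  "Egam n m S Lc \<gamma> j =
     (if (INF l\<in>{0..1::real}. tgam n m S Lc \<gamma> j l) = -\<infinity> then 0
      else (INF l\<in>{0..1::real}. Eratio n m S Lc \<gamma> j l))"

definition exchangeable ::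
  "'a measure \<Rightarrow> 'x measure \<Rightarrow> 'y measure \<Rightarrow> nat \<Rightarrow> (nat \<Rightarrow> 'a \<Rightarrow> 'x) \<Rightarrow> (nat \<Rightarrow> 'a \<Rightarrow> 'y) \<Rightarrow> bool" where
  "exchangeable M MX MY N X Y =
     (\<forall>\<pi>. \<pi> permutes {1..N} \<longrightarrow>
        distr M (PiM {1..N} (\<lambda>_. MX \<Otimes>\<^sub>M MY)) (\<lambda>\<omega>. \<lambda>i\<in>{1..N}. (X (\<pi> i) \<omega>, Y (\<pi> i) \<omega>))
      = distr M (PiM {1..N} (\<lambda>_. MX \<Otimes>\<^sub>M MY)) (\<lambda>\<omega>. \<lambda>i\<in>{1..N}. (X i \<omega>, Y i \<omega>)))"

end

theory Submission
  imports Defs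
begin


definition II :: "nat \<Rightarrow> nat \<Rightarrow> nat set" where "II n j = insert (n+j) {1..n}"
definition numS :: "nat \<Rightarrow> nat \<Rightarrow> (nat \<Rightarrow> real) \<Rightarrow> (nat \<Rightarrow> real) \<Rightarrow> real \<Rightarrow> real" where
  "numS n j S L t = (\<Sum>i\<in>II n j. L i * ind (S i \<le> t))"
definition cntS :: "nat \<Rightarrow> nat \<Rightarrow> nat \<Rightarrow> (nat \<Rightarrow> real) \<Rightarrow> real \<Rightarrow> real" where
  "cntS n m j S t = (\<Sum>k\<in>{1..m}. ind (k \<noteq> j \<and> S (n+k) \<le> t))"
definition okf where
  "okf n m j \<gamma> S L t = (numS n j S L t / (1 + cntS n m j S t) * (real m / (real n + 1)) \<le> \<gamma>)"
definition sel where
  "sel n m j \<gamma> S L k = (\<exists>i\<in>{1..n+m}. okf n m j \<gamma> S L (S i) \<and> S k \<le> S i)"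
definition Den where
  "Den n m j \<gamma> S L = (\<Sum>i\<in>II n j. L i * ind (sel n m j \<gamma> S L i))"
definition Gf where
  "Gf n m j \<gamma> S L k = (real n + 1) * L k * ind (sel n m j \<gamma> S L k) / Den n m j \<gamma> S L"

lemma ind_simps[simp]: "ind True = 1" "ind False = 0" "ind b \<ge> 0" "ind b \<le> 1"
  by (auto simp: ind_def)

lemma card_ind: "finite A \<Longrightarrow> real (card {k\<in>A. P k}) = (\<Sum>k\<in>A. ind (P k))"
proof -
  assume "finite A"
  then have "(\<Sum>k\<in>{k\<in>A. P k}. (1::real)) = (\<Sum>k\<in>A. if P k then 1 else 0)"
    by (rule sum.inter_filter)
  then show ?thesis by (simp add: ind_def)
qed

lemma FR_eq:
  assumes "j \<in> {1..m}"
  shows "FR n m S L j t (L (n+j)) = numS n j S L t / (1 + cntS n m j S t) * (real m / (real n + 1))"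
proof -
  have "numS n j S L t = L (n+j) * ind (S (n + j) \<le> t) + (\<Sum>i\<in>{1..n}. L i * ind (S i \<le> t))"
    using assms unfolding numS_def II_def by (subst sum.insert) auto
  moreover have "real (card {k\<in>{1..m}. k \<noteq> j \<and> S (n + k) \<le> t}) = cntS n m j S t"
    unfolding cntS_def by (rule card_ind) simp
  ultimately show ?thesis unfolding FR_def by simp
qed

lemma II_sub: "j \<in> {1..m} \<Longrightarrow> II n j \<subseteq> {1..n+m}"
  unfolding II_def by auto

lemma card_II: "j \<ge> 1 \<Longrightarrow> card (II n j) = n + 1"
  unfolding II_def by (subst card_insert_disjoint) auto

lemma Den_nonneg: "(\<And>i. i \<in> II n j \<Longrightarrow> L i \<ge> 0) \<Longrightarrow> Den n m j \<gamma> S L \<ge> 0"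
  unfolding Den_def by (intro sum_nonneg) auto

lemma Gf_nonneg: "(\<And>i. i \<in> II n j \<Longrightarrow> L i \<ge> 0) \<Longrightarrow> k \<in> II n j \<Longrightarrow> Gf n m j \<gamma> S L k \<ge> 0"
  unfolding Gf_def using Den_nonneg[of n j L m \<gamma> S]
  by (intro divide_nonneg_nonneg mult_nonneg_nonneg) auto

lemma Gf_sum: "(\<Sum>k\<in>II n j. Gf n m j \<gamma> S L k) \<le> real n + 1"
proof -
  have "(\<Sum>k\<in>II n j. Gf n m j \<gamma> S L k) = (real n + 1) * (Den n m j \<gamma> S L / Den n m j \<gamma> S L)"
    unfolding Gf_def Den_def by (simp add: sum_divide_distrib[symmetric] sum_distrib_left[symmetric] mult.assoc)
  also have "\<dots> \<le> real n + 1" by (cases "Den n m j \<gamma> S L = 0") auto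
  finally show ?thesis .
qed

lemma Gf_cong:
  assumes "\<And>i. i \<in> {1..n+m} \<Longrightarrow> S i = S' i \<and> L i = L' i" "j \<in> {1..m}" "k \<in> {1..n+m}"
  shows "Gf n m j \<gamma> S L k = Gf n m j \<gamma> S' L' k"
proof -
  have I: "\<And>i. i \<in> II n j \<Longrightarrow> S i = S' i \<and> L i = L' i" using assms(1) II_sub[OF assms(2), of n] by auto
  have num: "numS n j S L t = numS n j S' L' t" for t
    unfolding numS_def using I by (intro sum.cong) auto
  have cnt: "cntS n m j S t = cntS n m j S' t" for t
    unfolding cntS_def using assms(1) by (intro sum.cong) auto
  have ok: "okf n m j \<gamma> S L t = okf n m j \<gamma> S' L' t" for t
    unfolding okf_def num cnt ..
  have sl: "i \<in> {1..n+m} \<Longrightarrow> sel n m j \<gamma> S L i = sel n m j \<gamma> S' L' i" for i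
    unfolding sel_def ok using assms(1) by auto
  have d: "Den n m j \<gamma> S L = Den n m j \<gamma> S' L'"
    unfolding Den_def using I sl II_sub[OF assms(2), of n] by (intro sum.cong) auto
  show ?thesis unfolding Gf_def d using sl[OF assms(3)] assms by auto
qed

lemma Gf_swap:
  assumes "a \<in> II n j" "b \<in> II n j" "j \<in> {1..m}" "k \<in> {1..n+m}"
  defines "\<pi> \<equiv> Transposition.transpose a b"
  shows "Gf n m j \<gamma> (S \<circ> \<pi>) (L \<circ> \<pi>) k = Gf n m j \<gamma> S L (\<pi> k)"
proof -
  have pI: "\<pi> permutes II n j" unfolding \<pi>_def using assms by (intro permutes_swap_id)
  have pN: "\<pi> permutes {1..n+m}" unfolding \<pi>_def using assms II_sub[OF assms(3), of n] by (intro permutes_swap_id) auto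
  have num: "numS n j (S \<circ> \<pi>) (L \<circ> \<pi>) t = numS n j S L t" for t
    unfolding numS_def using sum.permute[OF pI, of "\<lambda>i. L i * ind (S i \<le> t)"] by (simp add: o_def)
  have fixp: "\<pi> (n+k') = n+k'" if "k' \<in> {1..m}" "k' \<noteq> j" for k'
    unfolding \<pi>_def using assms(1,2) that unfolding II_def by (auto simp: Transposition.transpose_def)
  have cnt: "cntS n m j (S \<circ> \<pi>) t = cntS n m j S t" for t
    unfolding cntS_def
  proof (intro sum.cong refl)
    fix x assume x: "x \<in> {1..m}"
    show "ind (x \<noteq> j \<and> (S \<circ> \<pi>) (n + x) \<le> t) = ind (x \<noteq> j \<and> S (n + x) \<le> t)"
      by (cases "x = j") (simp_all add: fixp[OF x])
  qed
  have ok: "okf n m j \<gamma> (S \<circ> \<pi>) (L \<circ> \<pi>) t = okf n m j \<gamma> S L t" for t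
    unfolding okf_def num cnt ..
  have sl: "sel n m j \<gamma> (S \<circ> \<pi>) (L \<circ> \<pi>) i = sel n m j \<gamma> S L (\<pi> i)" for i
  proof -
    have "sel n m j \<gamma> (S \<circ> \<pi>) (L \<circ> \<pi>) i = (\<exists>i'\<in>{1..n+m}. okf n m j \<gamma> S L (S (\<pi> i')) \<and> S (\<pi> i) \<le> S (\<pi> i'))"
      unfolding sel_def ok by simp
    also have "\<dots> = (\<exists>i'\<in>\<pi> ` {1..n+m}. okf n m j \<gamma> S L (S i') \<and> S (\<pi> i) \<le> S i')" by simp
    also have "\<pi> ` {1..n+m} = {1..n+m}" using pN by (rule permutes_image)
    finally show ?thesis unfolding sel_def by simp
  qed
  have d: "Den n m j \<gamma> (S \<circ> \<pi>) (L \<circ> \<pi>) = Den n m j \<gamma> S L"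
    unfolding Den_def sl using sum.permute[OF pI, of "\<lambda>i. L i * ind (sel n m j \<gamma> S L i)"] by (simp add: o_def)
  show ?thesis unfolding Gf_def d sl by simp
qed


lemma Eratio_nonneg:
  assumes "\<And>i. i \<in> {1..n+m} \<Longrightarrow> L i \<ge> 0" "l \<ge> 0"
  shows "Eratio n m S L \<gamma> j l \<ge> 0"
proof -
  have "(\<Sum>i\<in>{1..n}. L i * ind (ereal (S i) \<le> T)) \<ge> 0" for T
    using assms by (intro sum_nonneg mult_nonneg_nonneg) auto
  then show ?thesis using assms(2) unfolding Eratio_def Let_def
    by (auto intro!: divide_nonneg_nonneg)
qed

lemma Egam_nonneg:
  assumes "\<And>i. i \<in> {1..n+m} \<Longrightarrow> L i \<ge> 0"
  shows "Egam n m S L \<gamma> j \<ge> 0"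
  unfolding Egam_def using Eratio_nonneg[OF assms] by (auto intro!: INF_greatest)

lemma pointwise:
  assumes L: "\<And>i. i \<in> {1..n+m} \<Longrightarrow> L i \<ge> 0 \<and> L i \<le> 1" and j: "j \<in> {1..m}"
  shows "ereal (L (n+j)) * Egam n m S L \<gamma> j \<le> ereal (Gf n m j \<gamma> S L (n+j))"
proof -
  let ?l = "L (n+j)"
  have nj: "n + j \<in> {1..n+m}" "n+j \<in> II n j" using j unfolding II_def by auto
  have l01: "?l \<in> {0..1}" using L[OF nj(1)] by auto
  have LI: "\<And>i. i \<in> II n j \<Longrightarrow> L i \<ge> 0" using L II_sub[OF j, of n] by auto
  have G0: "Gf n m j \<gamma> S L (n+j) \<ge> 0" using Gf_nonneg[OF _ nj(2)] LI by blast
  show ?thesis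
  proof (cases "(INF l\<in>{0..1::real}. tgam n m S L \<gamma> j l) = -\<infinity>")
    case True
    then show ?thesis unfolding Egam_def using G0 by simp
  next
    case False
    define A where "A = {t\<in>Mscores n m S. FR n m S L j t ?l \<le> \<gamma>}"
    have "tgam n m S L \<gamma> j ?l \<noteq> -\<infinity>"
    proof
      assume "tgam n m S L \<gamma> j ?l = -\<infinity>"
      then have "(INF l\<in>{0..1::real}. tgam n m S L \<gamma> j l) \<le> -\<infinity>"
        using l01 by (metis INF_lower)
      then show False using False by simp
    qed
    then have Ane: "A \<noteq> {}" and T: "tgam n m S L \<gamma> j ?l = ereal (Max A)"
      unfolding tgam_def A_def Let_def by (auto split: if_splits)
    have finA: "finite A" unfolding A_def Mscores_def by auto
    have selT: "(ereal (S k) \<le> tgam n m S L \<gamma> j ?l) = sel n m j \<gamma> S L k" for k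
    proof -
      have "(ereal (S k) \<le> tgam n m S L \<gamma> j ?l) = (\<exists>a\<in>A. S k \<le> a)"
        unfolding T using Max_ge_iff[OF finA Ane] by simp
      also have "\<dots> = sel n m j \<gamma> S L k"
        unfolding A_def Mscores_def sel_def okf_def FR_eq[OF j] by auto
      finally show ?thesis .
    qed
    have den: "?l * ind (sel n m j \<gamma> S L (n+j)) + (\<Sum>i\<in>{1..n}. L i * ind (sel n m j \<gamma> S L i))
        = Den n m j \<gamma> S L"
      unfolding Den_def II_def using j by (subst sum.insert) auto
    have ER: "Eratio n m S L \<gamma> j ?l =
       (if (real n + 1) * ind (sel n m j \<gamma> S L (n+j)) = 0 then 0
        else if Den n m j \<gamma> S L = 0 then \<infinity>
        else ereal ((real n + 1) * ind (sel n m j \<gamma> S L (n+j)) / Den n m j \<gamma> S L))"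
      unfolding Eratio_def Let_def selT den ..
    have "Egam n m S L \<gamma> j \<le> Eratio n m S L \<gamma> j ?l"
      unfolding Egam_def using False l01 by (simp add: INF_lower)
    then have "ereal ?l * Egam n m S L \<gamma> j \<le> ereal ?l * Eratio n m S L \<gamma> j ?l"
      using l01 by (intro ereal_mult_left_mono) auto
    also have "\<dots> \<le> ereal (Gf n m j \<gamma> S L (n+j))"
    proof (cases "sel n m j \<gamma> S L (n+j)")
      case False
      then show ?thesis unfolding ER using G0 by simp
    next
      case True
      have Dge: "?l \<le> Den n m j \<gamma> S L"
      proof -
        have "(\<Sum>i\<in>{1..n}. L i * ind (sel n m j \<gamma> S L i)) \<ge> 0"
          using L by (intro sum_nonneg mult_nonneg_nonneg) auto
        then show ?thesis using den True by simp
      qed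
      show ?thesis
      proof (cases "Den n m j \<gamma> S L = 0")
        case True
        then have "?l = 0" using Dge l01 by simp
        then show ?thesis using G0 by (simp add: zero_ereal_def[symmetric])
      next
        case False
        then show ?thesis unfolding ER Gf_def using True by (simp add: mult.commute)
      qed
    qed
    finally show ?thesis .
  qed
qed


lemma ind_meas[measurable]: "Measurable.pred P Q \<Longrightarrow> (\<lambda>z. ind (Q z)) \<in> borel_measurable P"
  unfolding ind_def by measurable

lemma Gf_meas:
  assumes j: "j \<in> {1..m}"
    and Sm: "\<And>i. i \<in> {1..n+m} \<Longrightarrow> Sf i \<in> borel_measurable P"
    and Lm: "\<And>i. i \<in> {1..n+m} \<Longrightarrow> Lf i \<in> borel_measurable P"
    and k: "k \<in> {1..n+m}"
  shows "(\<lambda>z. Gf n m j \<gamma> (\<lambda>i. Sf i z) (\<lambda>i. Lf i z) k) \<in> borel_measurable P"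
proof -
  note IIs = II_sub[OF j, of n]
  have num: "(\<lambda>z. numS n j (\<lambda>i. Sf i z) (\<lambda>i. Lf i z) (tf z)) \<in> borel_measurable P"
    if [measurable]: "tf \<in> borel_measurable P" for tf
    unfolding numS_def
  proof (intro borel_measurable_sum)
    fix i assume "i \<in> II n j"
    then have [measurable]: "Sf i \<in> borel_measurable P" "Lf i \<in> borel_measurable P"
      using Sm Lm IIs by auto
    show "(\<lambda>z. Lf i z * ind (Sf i z \<le> tf z)) \<in> borel_measurable P" by measurable
  qed
  have cnt: "(\<lambda>z. cntS n m j (\<lambda>i. Sf i z) (tf z)) \<in> borel_measurable P"
    if [measurable]: "tf \<in> borel_measurable P" for tf
    unfolding cntS_def
  proof (intro borel_measurable_sum)
    fix i assume "i \<in> {1..m}"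
    then have [measurable]: "Sf (n+i) \<in> borel_measurable P"
      using Sm by auto
    show "(\<lambda>z. ind (i \<noteq> j \<and> Sf (n+i) z \<le> tf z)) \<in> borel_measurable P" by measurable
  qed
  have ok: "Measurable.pred P (\<lambda>z. okf n m j \<gamma> (\<lambda>i. Sf i z) (\<lambda>i. Lf i z) (Sf i z))" if i: "i \<in> {1..n+m}" for i
  proof -
    have [measurable]: "Sf i \<in> borel_measurable P" using Sm i by auto
    have [measurable]: "(\<lambda>z. numS n j (\<lambda>i. Sf i z) (\<lambda>i. Lf i z) (Sf i z)) \<in> borel_measurable P"
      by (rule num) measurable
    have [measurable]: "(\<lambda>z. cntS n m j (\<lambda>i. Sf i z) (Sf i z)) \<in> borel_measurable P"
      by (rule cnt) measurable
    show ?thesis unfolding okf_def by measurable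
  qed
  have sl: "Measurable.pred P (\<lambda>z. sel n m j \<gamma> (\<lambda>i. Sf i z) (\<lambda>i. Lf i z) k')" if k': "k' \<in> {1..n+m}" for k'
    unfolding sel_def
  proof (rule pred_intros_finite(4)[OF finite_atLeastAtMost])
    fix i assume i: "i \<in> {1..n+m}"
    have [measurable]: "Sf i \<in> borel_measurable P" "Sf k' \<in> borel_measurable P" using Sm i k' by auto
    note [measurable] = ok[OF i]
    show "Measurable.pred P (\<lambda>z. okf n m j \<gamma> (\<lambda>i. Sf i z) (\<lambda>i. Lf i z) (Sf i z) \<and> Sf k' z \<le> Sf i z)"
      by measurable
  qed
  have den[measurable]: "(\<lambda>z. Den n m j \<gamma> (\<lambda>i. Sf i z) (\<lambda>i. Lf i z)) \<in> borel_measurable P"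
    unfolding Den_def
  proof (intro borel_measurable_sum)
    fix i assume "i \<in> II n j"
    then have i: "i \<in> {1..n+m}" using IIs by auto
    have [measurable]: "Lf i \<in> borel_measurable P" using Lm i by auto
    note [measurable] = sl[OF i]
    show "(\<lambda>z. Lf i z * ind (sel n m j \<gamma> (\<lambda>i. Sf i z) (\<lambda>i. Lf i z) i)) \<in> borel_measurable P"
      by measurable
  qed
  have [measurable]: "Lf k \<in> borel_measurable P" using Lm k by auto
  note [measurable] = sl[OF k]
  show ?thesis unfolding Gf_def by measurable
qed


theorem theorem5p1:
  fixes M :: "'a measure" and MX :: "'x measure" and MY :: "'y measure"
    and X :: "nat \<Rightarrow> 'a \<Rightarrow> 'x" and Y :: "nat \<Rightarrow> 'a \<Rightarrow> 'y"
    and f :: "'f" and risk :: "'f \<Rightarrow> 'x \<Rightarrow> 'y \<Rightarrow> real"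
    and s :: "'x \<Rightarrow> real" and n m j :: nat and \<gamma> :: real
  assumes "prob_space M"
    and "\<And>i. i \<in> {1..n+m} \<Longrightarrow> X i \<in> measurable M MX"
    and "\<And>i. i \<in> {1..n+m} \<Longrightarrow> Y i \<in> measurable M MY"
    and "exchangeable M MX MY (n + m) X Y"
    and "(\<lambda>(x, y). risk f x y) \<in> borel_measurable (MX \<Otimes>\<^sub>M MY)"
    and "\<And>x y. x \<in> space MX \<Longrightarrow> y \<in> space MY \<Longrightarrow> risk f x y \<in> {0..1}"
    and "s \<in> borel_measurable MX"
    and "\<And>x. x \<in> space MX \<Longrightarrow> s x \<in> {0..1}"
    and "\<gamma> > 0"
    and "j \<in> {1..m}"
  shows "(\<forall>\<omega>\<in>space M.
            Egam n m (\<lambda>i. s (X i \<omega>)) (\<lambda>i. risk f (X i \<omega>) (Y i \<omega>)) \<gamma> j \<ge> 0)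
       \<and> (\<integral>\<^sup>+ \<omega>. e2ennreal (ereal (risk f (X (n + j) \<omega>) (Y (n + j) \<omega>))
                  * Egam n m (\<lambda>i. s (X i \<omega>)) (\<lambda>i. risk f (X i \<omega>) (Y i \<omega>)) \<gamma> j) \<partial>M) \<le> 1"
proof -
  note Xm = assms(2) and Ym = assms(3) and exch = assms(4) and rm = assms(5)
    and r01 = assms(6) and sm = assms(7) and j = assms(10)
  interpret prob_space M by (rule assms(1))
  define N where "N = n + m"
  define P where "P = PiM {1..N} (\<lambda>_. MX \<Otimes>\<^sub>M MY)"
  define Sw where "Sw \<omega> = (\<lambda>i. s (X i \<omega>))" for \<omega>
  define Lw where "Lw \<omega> = (\<lambda>i. risk f (X i \<omega>) (Y i \<omega>))" for \<omega>
  define Sz where "Sz z = (\<lambda>i. s (fst (z i)))" for z :: "nat \<Rightarrow> 'x \<times> 'y"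
  define Lz where "Lz z = (\<lambda>i. risk f (fst (z i)) (snd (z i)))" for z :: "nat \<Rightarrow> 'x \<times> 'y"
  define G where "G k \<omega> = ennreal (Gf n m j \<gamma> (Sw \<omega>) (Lw \<omega>) k)" for k \<omega>
  define g where "g k z = ennreal (Gf n m j \<gamma> (Sz z) (Lz z) k)" for k z
  have nj: "n + j \<in> II n j" unfolding II_def by simp
  have IIs: "II n j \<subseteq> {1..N}" using II_sub[OF j] N_def by simp
  have L01: "\<And>i. i \<in> {1..N} \<Longrightarrow> 0 \<le> Lw \<omega> i \<and> Lw \<omega> i \<le> 1" if "\<omega> \<in> space M" for \<omega>
  proof -
    fix i assume i: "i \<in> {1..N}"
    have "X i \<omega> \<in> space MX" "Y i \<omega> \<in> space MY"
      using Xm[of i] Ym[of i] i that N_def by (auto simp: measurable_space)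
    then show "0 \<le> Lw \<omega> i \<and> Lw \<omega> i \<le> 1" using r01 unfolding Lw_def by auto
  qed
  have part1: "\<forall>\<omega>\<in>space M. Egam n m (Sw \<omega>) (Lw \<omega>) \<gamma> j \<ge> 0"
    using L01 by (auto intro!: Egam_nonneg simp: N_def)
  have Gm: "G k \<in> borel_measurable M" if k: "k \<in> {1..N}" for k
  proof -
    have "(\<lambda>\<omega>. Gf n m j \<gamma> (\<lambda>i. s (X i \<omega>)) (\<lambda>i. risk f (X i \<omega>) (Y i \<omega>)) k) \<in> borel_measurable M"
    proof (rule Gf_meas[OF j])
      fix i assume i: "i \<in> {1..n+m}"
      note [measurable] = Xm[OF i] Ym[OF i]
      show "(\<lambda>\<omega>. s (X i \<omega>)) \<in> borel_measurable M" using sm by measurable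
      have "(\<lambda>\<omega>. (\<lambda>(x, y). risk f x y) (X i \<omega>, Y i \<omega>)) \<in> borel_measurable M"
        using rm by measurable
      then show "(\<lambda>\<omega>. risk f (X i \<omega>) (Y i \<omega>)) \<in> borel_measurable M" by simp
    qed (use k N_def in auto)
    then show ?thesis unfolding G_def Sw_def Lw_def by measurable
  qed
  have gm: "g k \<in> borel_measurable P" if k: "k \<in> {1..N}" for k
  proof -
    have "(\<lambda>z. Gf n m j \<gamma> (\<lambda>i. s (fst (z i))) (\<lambda>i. risk f (fst (z i)) (snd (z i))) k) \<in> borel_measurable P"
    proof (rule Gf_meas[OF j])
      fix i assume i: "i \<in> {1..n+m}"
      have ci[measurable]: "(\<lambda>z. z i) \<in> measurable P (MX \<Otimes>\<^sub>M MY)"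
        unfolding P_def using i N_def by (intro measurable_component_singleton) auto
      show "(\<lambda>z. s (fst (z i))) \<in> borel_measurable P" using sm by measurable
      have "(\<lambda>z. (\<lambda>(x, y). risk f x y) (z i)) \<in> borel_measurable P"
        using rm by measurable
      then show "(\<lambda>z. risk f (fst (z i)) (snd (z i))) \<in> borel_measurable P"
        by (simp add: case_prod_beta)
    qed (use k N_def in auto)
    then show ?thesis unfolding g_def Sz_def Lz_def by measurable
  qed
  have Dm: "(\<lambda>\<omega>. \<lambda>i\<in>{1..N}. (X (p i) \<omega>, Y (p i) \<omega>)) \<in> measurable M P"
    if p: "p permutes {1..N}" for p
    unfolding P_def
  proof (rule measurable_restrict)
    fix i assume i: "i \<in> {1..N}"
    then have "p i \<in> {1..N}" using p permutes_in_image[OF p] by blast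
    then have [measurable]: "X (p i) \<in> measurable M MX" "Y (p i) \<in> measurable M MY"
      using Xm Ym N_def by auto
    show "(\<lambda>\<omega>. (X (p i) \<omega>, Y (p i) \<omega>)) \<in> measurable M (MX \<Otimes>\<^sub>M MY)" by measurable
  qed
  have swap: "integral\<^sup>N M (G k) = integral\<^sup>N M (G (n+j))" if k: "k \<in> II n j" for k
  proof -
    define p where "p = Transposition.transpose k (n+j)"
    have pI: "p permutes {1..N}" unfolding p_def using k nj IIs by (intro permutes_swap_id) auto
    have idp: "id permutes {1..N}" by (rule permutes_id)
    have Dm0: "(\<lambda>\<omega>. \<lambda>i\<in>{1..N}. (X i \<omega>, Y i \<omega>)) \<in> measurable M P"
      using Dm[OF idp] by simp
    have e: "distr M P (\<lambda>\<omega>. \<lambda>i\<in>{1..N}. (X (p i) \<omega>, Y (p i) \<omega>))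
           = distr M P (\<lambda>\<omega>. \<lambda>i\<in>{1..N}. (X i \<omega>, Y i \<omega>))"
      using exch pI unfolding exchangeable_def P_def N_def by blast
    have kN: "k \<in> {1..N}" "n + j \<in> {1..N}" using k nj IIs by auto
    have c0: "g (n+j) (\<lambda>i\<in>{1..N}. (X i \<omega>, Y i \<omega>)) = G (n+j) \<omega>" for \<omega>
      unfolding g_def G_def
      by (rule arg_cong[where f=ennreal], rule Gf_cong) (use j kN N_def in \<open>auto simp: Sz_def Lz_def Sw_def Lw_def\<close>)
    have c1: "g (n+j) (\<lambda>i\<in>{1..N}. (X (p i) \<omega>, Y (p i) \<omega>)) = G k \<omega>" for \<omega>
    proof -
      have "g (n+j) (\<lambda>i\<in>{1..N}. (X (p i) \<omega>, Y (p i) \<omega>)) = ennreal (Gf n m j \<gamma> (Sw \<omega> \<circ> p) (Lw \<omega> \<circ> p) (n+j))"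
        unfolding g_def
        by (rule arg_cong[where f=ennreal], rule Gf_cong) (use j kN N_def in \<open>auto simp: Sz_def Lz_def Sw_def Lw_def\<close>)
      also have "\<dots> = G k \<omega>" unfolding G_def p_def
        using Gf_swap[OF k nj j, of "n+j" \<gamma> "Sw \<omega>" "Lw \<omega>"] kN N_def by simp
      finally show ?thesis .
    qed
    have "integral\<^sup>N M (G (n+j)) = (\<integral>\<^sup>+\<omega>. g (n+j) (\<lambda>i\<in>{1..N}. (X i \<omega>, Y i \<omega>)) \<partial>M)"
      using c0 by simp
    also have "\<dots> = integral\<^sup>N (distr M P (\<lambda>\<omega>. \<lambda>i\<in>{1..N}. (X i \<omega>, Y i \<omega>))) (g (n+j))"
      using nn_integral_distr[OF Dm0, of "g (n+j)"] gm[OF kN(2)] by simp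
    also have "\<dots> = integral\<^sup>N (distr M P (\<lambda>\<omega>. \<lambda>i\<in>{1..N}. (X (p i) \<omega>, Y (p i) \<omega>))) (g (n+j))"
      using e by simp
    also have "\<dots> = (\<integral>\<^sup>+\<omega>. g (n+j) (\<lambda>i\<in>{1..N}. (X (p i) \<omega>, Y (p i) \<omega>)) \<partial>M)"
      using nn_integral_distr[OF Dm[OF pI], of "g (n+j)"] gm[OF kN(2)] by simp
    also have "\<dots> = integral\<^sup>N M (G k)" using c1 by simp
    finally show ?thesis by simp
  qed
  have "ennreal (real n + 1) * integral\<^sup>N M (G (n+j)) = (\<Sum>k\<in>II n j. integral\<^sup>N M (G k))"
    using swap card_II[of j n] j by (simp add: ennreal_of_nat_eq_real_of_nat add.commute)
  also have "\<dots> = (\<integral>\<^sup>+\<omega>. (\<Sum>k\<in>II n j. G k \<omega>) \<partial>M)"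
    by (rule nn_integral_sum[symmetric]) (use Gm IIs in auto)
  also have "\<dots> \<le> (\<integral>\<^sup>+\<omega>. ennreal (real n + 1) \<partial>M)"
  proof (rule nn_integral_mono)
    fix \<omega> assume w: "\<omega> \<in> space M"
    have "(\<Sum>k\<in>II n j. G k \<omega>) = ennreal (\<Sum>k\<in>II n j. Gf n m j \<gamma> (Sw \<omega>) (Lw \<omega>) k)"
      unfolding G_def using Gf_nonneg L01[OF w] IIs by (intro sum_ennreal) (auto simp: subset_iff)
    also have "\<dots> \<le> ennreal (real n + 1)" using Gf_sum by (intro ennreal_leI) 
    finally show "(\<Sum>k\<in>II n j. G k \<omega>) \<le> ennreal (real n + 1)" .
  qed
  also have "\<dots> = ennreal (real n + 1) * 1" by (simp add: emeasure_space_1)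
  finally have int1: "integral\<^sup>N M (G (n+j)) \<le> 1"
    by (subst (asm) ennreal_mult_le_mult_iff) auto
  have "(\<integral>\<^sup>+ \<omega>. e2ennreal (ereal (Lw \<omega> (n + j)) * Egam n m (Sw \<omega>) (Lw \<omega>) \<gamma> j) \<partial>M)
      \<le> integral\<^sup>N M (G (n+j))"
  proof (rule nn_integral_mono)
    fix \<omega> assume w: "\<omega> \<in> space M"
    have "ereal (Lw \<omega> (n + j)) * Egam n m (Sw \<omega>) (Lw \<omega>) \<gamma> j \<le> ereal (Gf n m j \<gamma> (Sw \<omega>) (Lw \<omega>) (n+j))"
      by (rule pointwise[OF _ j]) (use L01[OF w] N_def in auto)
    then show "e2ennreal (ereal (Lw \<omega> (n + j)) * Egam n m (Sw \<omega>) (Lw \<omega>) \<gamma> j) \<le> G (n+j) \<omega>"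
      unfolding G_def by (metis e2ennreal_mono e2ennreal_ereal)
  qed
  then show ?thesis using part1 int1 unfolding Sw_def Lw_def by auto
qed

end
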